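(* Every sequence $a_1,a_2,\dotsc$ in a semigroup has a sumsequence $b_1,b_2,\dotsc$ of one of the following two types: (1) $b_n+b_m=b_n$ for all natural numbers $n<m$; or (2) for every natural number $n$, $\mathrm{FS}(b_1,\dotsc,b_n)\cap(\mathrm{FS}(b_1,\dotsc,b_n)+b_{n+1})=\emptyset$.
   Context: Semigroups are written additively and are not assumed commutative. For a sequence $a_1,a_2,\dotsc$ and a finite nonempty index set $F=\{i_1<\dotsb<i_m\}$, $a_F:=a_{i_1}+\dotsb+a_{i_m}$; $F_1<F_2$ means every element of $F_1$ is smaller than every element of $F_2$. A sumsequence of $a_1,a_2,\dotsc$ is a sequence $a_{F_1},a_{F_2},\dotsc$ for nonempty finite index sets $F_1<F_2<\dotsb$. $\mathrm{FS}(b_1,\dotsc,b_n):=\{b_{i_1}+\dotsb+b_{i_m}: m\ge1,\ i_1<\dotsb<i_m\le n\}$, and for a set $X$ and element $c$, $X+c:=\{x+c:x\in X\}$. *)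

theory Defs
  imports Main
begin

fun listsum1 :: "'a::semigroup_add list \<Rightarrow> 'a" where
  "listsum1 [x] = x"
| "listsum1 (x # y # ys) = x + listsum1 (y # ys)"
| "listsum1 [] = undefined"

definition idxsum :: "(nat \<Rightarrow> 'a::semigroup_add) \<Rightarrow> nat set \<Rightarrow> 'a" where
  "idxsum a F = listsum1 (map a (sorted_list_of_set F))"

definition sumsequence :: "(nat \<Rightarrow> 'a::semigroup_add) \<Rightarrow> (nat \<Rightarrow> 'a) \<Rightarrow> bool" where
  "sumsequence a b \<longleftrightarrow> (\<exists>F :: nat \<Rightarrow> nat set.
     (\<forall>n. finite (F n) \<and> F n \<noteq> {}) \<and>
     (\<forall>n m. n < m \<longrightarrow> (\<forall>x\<in>F n. \<forall>y\<in>F m. x < y)) \<and>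
     (\<forall>n. b n = idxsum a (F n)))"

text \<open>FS(b_0, ..., b_{n-1}) (0-based indexing).\<close>
definition FS :: "(nat \<Rightarrow> 'a::semigroup_add) \<Rightarrow> nat \<Rightarrow> 'a set" where
  "FS b n = {idxsum b G | G. G \<subseteq> {..<n} \<and> G \<noteq> {}}"

end

theory Submission
  imports Defs "HOL-Library.Infinite_Set"
begin

lemma listsum1_append:
  "xs \<noteq> [] \<Longrightarrow> ys \<noteq> [] \<Longrightarrow> listsum1 (xs @ ys) = listsum1 xs + listsum1 ys"
proof (induction xs rule: listsum1.induct)
  case (1 x)
  then obtain z zs where "ys = z # zs" by (cases ys) auto
  then show ?case by simp
next
  case (2 x y zs)
  then show ?case by (simp add: add.assoc)
next
  case 3 then show ?case by simp
qed

lemma sorted_union: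
  assumes "finite (A::nat set)" "finite B" "\<forall>x\<in>A. \<forall>y\<in>B. x<y"
  shows "sorted_list_of_set (A \<union> B) = sorted_list_of_set A @ sorted_list_of_set B"
proof -
  let ?xs = "sorted_list_of_set A @ sorted_list_of_set B"
  have "sorted_wrt (<) ?xs" using assms
    unfolding sorted_wrt_append by (simp add: strict_sorted_list_of_set)
  moreover have "set ?xs = A \<union> B" using assms by simp
  moreover have "sorted_wrt (<) (sorted_list_of_set (A \<union> B))"
    by (simp add: strict_sorted_list_of_set)
  moreover have "set (sorted_list_of_set (A \<union> B)) = A \<union> B" using assms by simp
  ultimately show ?thesis using strict_sorted_equal by metis
qed
lemma idxsum_union:
  assumes "finite A" "finite B" "A \<noteq> {}" "B \<noteq> {}" "\<forall>x\<in>A. \<forall>y\<in>B. x<y"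
  shows "idxsum a (A \<union> B) = idxsum a A + idxsum a B"
  unfolding idxsum_def sorted_union[OF assms(1,2,5)] map_append
  by (rule listsum1_append) (use assms in auto)

definition blocks :: "(nat \<Rightarrow> nat set) \<Rightarrow> bool" where
  "blocks F \<longleftrightarrow> (\<forall>n. finite (F n) \<and> F n \<noteq> {}) \<and>
     (\<forall>n m. n < m \<longrightarrow> (\<forall>x\<in>F n. \<forall>y\<in>F m. x < y))"

lemma compose_list:
  assumes "blocks F" "sorted_wrt (<) xs" "xs \<noteq> []"
  shows "listsum1 (map (\<lambda>k. idxsum a (F k)) xs) = idxsum a (\<Union>(F ` set xs))"
  using assms(2,3)
proof (induction xs rule: listsum1.induct)
  case (1 x)
  then show ?case by simp
next
  case (2 x y zs)
  have "idxsum a (\<Union>(F ` set (x # y # zs))) = idxsum a (F x \<union> \<Union>(F ` set (y # zs)))"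
    by simp
  also have "\<dots> = idxsum a (F x) + idxsum a (\<Union>(F ` set (y # zs)))"
    apply (rule idxsum_union)
    using assms(1) 2(2) unfolding blocks_def by auto
  finally show ?case using 2 by simp
qed auto

lemma compose:
  assumes "blocks F" "finite G" "G \<noteq> {}"
  shows "idxsum (\<lambda>k. idxsum a (F k)) G = idxsum a (\<Union>(F ` G))"
  using compose_list[OF assms(1), of "sorted_list_of_set G" a] assms
  by (simp add: idxsum_def)

lemma absorb_list:
  "ys \<noteq> [] \<Longrightarrow> \<forall>y\<in>set ys. t + y = t \<Longrightarrow> t + listsum1 ys = (t::'a::semigroup_add)"
  by (induction ys rule: listsum1.induct) (auto simp: add.assoc[symmetric])

lemma absorb:
  assumes "finite G" "G \<noteq> {}" "\<forall>k. t + c k = t"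
  shows "t + idxsum c G = t"
  unfolding idxsum_def using assms
  by (intro absorb_list) auto

lemma blocks_compose:
  assumes "blocks F" "blocks H"
  shows "blocks (\<lambda>k. \<Union>(F ` H k))"
  unfolding blocks_def
proof (intro conjI allI impI ballI)
  fix n show "finite (\<Union>(F ` H n))" using assms unfolding blocks_def by auto
  show "\<Union>(F ` H n) \<noteq> {}" using assms unfolding blocks_def by auto
next
  fix n m x y assume nm: "n < m" and x: "x \<in> \<Union>(F ` H n)" and y: "y \<in> \<Union>(F ` H m)"
  then obtain i j where i: "i \<in> H n" "x \<in> F i" and j: "j \<in> H m" "y \<in> F j" by auto
  have "i < j" using assms(2) nm i j unfolding blocks_def by blast
  then show "x < y" using assms(1) i j unfolding blocks_def by blast
qed



definition type2 :: "(nat \<Rightarrow> 'a::semigroup_add) \<Rightarrow> bool" where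
  "type2 b \<longleftrightarrow> (\<forall>n. FS b (Suc n) \<inter> ((\<lambda>x. x + b (Suc n)) ` FS b (Suc n)) = {})"

definition AB :: "(nat \<Rightarrow> 'a::semigroup_add) \<Rightarrow> nat set \<Rightarrow> (nat \<Rightarrow> nat set) \<Rightarrow> bool" where
  "AB c G F' \<longleftrightarrow> finite G \<and> G \<noteq> {} \<and> blocks F' \<and> (\<forall>k. \<forall>x\<in>G. \<forall>y\<in>F' k. x < y) \<and>
     (\<forall>k. idxsum c G + idxsum c (F' k) = idxsum c G)"

definition Sm :: "(nat \<Rightarrow> 'a::semigroup_add) \<Rightarrow> nat \<Rightarrow> 'a set" where
  "Sm c m = {idxsum c X | X. X \<subseteq> {..<m} \<and> X \<noteq> {}}"

lemma finite_Sm: "finite (Sm c m)"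
proof -
  have "Sm c m = idxsum c ` {X. X \<subseteq> {..<m} \<and> X \<noteq> {}}" unfolding Sm_def by blast
  moreover have "finite {X. X \<subseteq> {..<m} \<and> X \<noteq> {}}" by simp
  ultimately show ?thesis by simp
qed

lemma step:
  assumes noab: "\<not> (\<exists>G F'. AB c G F')"
  shows "\<exists>H. finite H \<and> H \<noteq> {} \<and> (\<forall>x\<in>H. m \<le> x) \<and>
           Sm c m \<inter> ((\<lambda>x. x + idxsum c H) ` Sm c m) = {}"
proof (rule ccontr)
  assume "\<not> ?thesis"
  then have hyp: "\<And>H. finite H \<Longrightarrow> H \<noteq> {} \<Longrightarrow> (\<forall>x\<in>H. m \<le> x) \<Longrightarrow>
      \<exists>s\<in>Sm c m. s + idxsum c H \<in> Sm c m" by blast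
  define f where "f j = (SOME p. p \<in> Sm c m \<times> Sm c m \<and> fst p + idxsum c {m..<j} = snd p)" for j
  have fj: "f j \<in> Sm c m \<times> Sm c m \<and> fst (f j) + idxsum c {m..<j} = snd (f j)" if mj: "m < j" for j
  proof -
    obtain s where "s \<in> Sm c m" "s + idxsum c {m..<j} \<in> Sm c m"
      using hyp[of "{m..<j}"] mj by auto
    then have "\<exists>p. p \<in> Sm c m \<times> Sm c m \<and> fst p + idxsum c {m..<j} = snd p"
      by (intro exI[of _ "(s, s + idxsum c {m..<j})"]) auto
    then show ?thesis unfolding f_def by (rule someI_ex)
  qed
  have inf: "\<not> finite {Suc m..}" by (rule infinite_Ici)
  have "f ` {Suc m..} \<subseteq> Sm c m \<times> Sm c m"
  proof
    fix p assume "p \<in> f ` {Suc m..}"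
    then obtain j where "j \<ge> Suc m" "p = f j" by auto
    then show "p \<in> Sm c m \<times> Sm c m" using fj[of j] by simp
  qed
  then have "finite (f ` {Suc m..})" using finite_Sm by (meson finite_SigmaI finite_subset)
  then obtain j0 where j0: "j0 \<in> {Suc m..}" and Jinf: "\<not> finite {j\<in>{Suc m..}. f j = f j0}"
    using pigeonhole_infinite[OF inf] by blast
  define J where "J = {j\<in>{Suc m..}. f j = f j0}"
  obtain e :: "nat \<Rightarrow> nat" where e: "strict_mono e" "\<And>n. e n \<in> J"
    using infinite_enumerate[OF Jinf[folded J_def]] by metis
  define s where "s = fst (f j0)"
  define t where "t = snd (f j0)"
  have me: "m < e n" for n using e(2)[of n] unfolding J_def by auto
  have st: "s + idxsum c {m..<e n} = t" for n
    using fj[OF me[of n]] e(2)[of n] unfolding J_def s_def t_def by auto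
  have "s \<in> Sm c m" using fj[of j0] j0 unfolding s_def by auto
  then obtain X where X: "X \<subseteq> {..<m}" "X \<noteq> {}" "s = idxsum c X" unfolding Sm_def by blast
  have finX: "finite X" using X(1) finite_subset by blast
  have split: "idxsum c {m..<e (Suc p)} = idxsum c {m..<e p} + idxsum c {e p..<e (Suc p)}" for p
  proof -
    have "e p < e (Suc p)" using e(1) by (simp add: strict_mono_def)
    then have "{m..<e (Suc p)} = {m..<e p} \<union> {e p..<e (Suc p)}" using me[of p] by auto
    moreover have "idxsum c ({m..<e p} \<union> {e p..<e (Suc p)}) = idxsum c {m..<e p} + idxsum c {e p..<e (Suc p)}"
      apply (rule idxsum_union) using me[of p] \<open>e p < e (Suc p)\<close> by auto
    ultimately show ?thesis by simp
  qed
  have "AB c (X \<union> {m..<e 0}) (\<lambda>p. {e p..<e (Suc p)})"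
    unfolding AB_def
  proof (intro conjI allI ballI)
    show "finite (X \<union> {m..<e 0})" using finX by simp
    show "X \<union> {m..<e 0} \<noteq> {}" using X by simp
    show "blocks (\<lambda>p. {e p..<e (Suc p)})" unfolding blocks_def
    proof (intro conjI allI impI ballI)
      fix n show "finite {e n..<e (Suc n)}" by simp
      show "{e n..<e (Suc n)} \<noteq> {}" using e(1) by (simp add: strict_mono_def)
    next
      fix n m' x y assume "n < m'" "x \<in> {e n..<e (Suc n)}" "y \<in> {e m'..<e (Suc m')}"
      moreover have "e (Suc n) \<le> e m'" using \<open>n < m'\<close> e(1) by (simp add: strict_mono_less_eq)
      ultimately show "x < y" by auto
    qed
  next
    fix k x y assume "x \<in> X \<union> {m..<e 0}" "y \<in> {e k..<e (Suc k)}"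
    moreover have "e 0 \<le> e k" using e(1) by (simp add: strict_mono_less_eq)
    ultimately show "x < y" using X(1) me[of k] by auto
  next
    fix k
    have lt: "\<forall>x\<in>X. \<forall>y\<in>{m..<e 0}. x < y" using X(1) by fastforce
    have cT: "idxsum c (X \<union> {m..<e 0}) = t"
      using idxsum_union[of X "{m..<e 0}" c] finX X me[of 0] st[of 0] lt by auto
    have "t + idxsum c {e k..<e (Suc k)} = s + idxsum c {m..<e (Suc k)}"
      using st[of k] split[of k] by (metis add.assoc)
    also have "\<dots> = t" by (rule st)
    finally show "idxsum c (X \<union> {m..<e 0}) + idxsum c {e k..<e (Suc k)} = idxsum c (X \<union> {m..<e 0})"
      using cT by simp
  qed
  then show False using noab by blast
qed



lemma lemmaA:
  assumes noab: "\<not> (\<exists>G F'. AB c G F')"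
  shows "\<exists>H. blocks H \<and> type2 (\<lambda>n. idxsum c (H n))"
proof -
  define nxt where "nxt m = (SOME H. finite H \<and> H \<noteq> {} \<and> (\<forall>x\<in>H. m \<le> x) \<and>
           Sm c m \<inter> ((\<lambda>x. x + idxsum c H) ` Sm c m) = {})" for m
  have nxt: "finite (nxt m) \<and> nxt m \<noteq> {} \<and> (\<forall>x\<in>nxt m. m \<le> x) \<and>
           Sm c m \<inter> ((\<lambda>x. x + idxsum c (nxt m)) ` Sm c m) = {}" for m
    unfolding nxt_def by (rule someI_ex) (rule step[OF noab])
  define H where "H = rec_nat {0} (\<lambda>n h. nxt (Suc (Max h)))"
  have H0: "H 0 = {0}" and HS: "H (Suc n) = nxt (Suc (Max (H n)))" for n
    unfolding H_def by simp_all
  have fin: "finite (H n) \<and> H n \<noteq> {}" for n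
    by (cases n) (use H0 HS nxt in auto)
  have gt: "\<forall>y\<in>H (Suc n). Max (H n) < y" for n
    using nxt HS by (metis Suc_le_eq)
  have sm: "strict_mono (\<lambda>n. Max (H n))"
    unfolding strict_mono_Suc_iff
  proof
    fix n show "Max (H n) < Max (H (Suc n))"
      using gt[of n] fin[of "Suc n"] Max_in by blast
  qed
  have mo: "Max (H n) \<le> Max (H m)" if "n \<le> m" for n m
    using strict_mono_less_eq[OF sm, of n m] that by simp
  have le: "x \<le> Max (H n)" if "x \<in> H n" for x n using fin that by simp
  have blk: "blocks H" unfolding blocks_def
  proof (intro conjI allI impI ballI)
    fix n show "finite (H n)" "H n \<noteq> {}" using fin by auto
  next
    fix n m x y assume "n < m" "x \<in> H n" "y \<in> H m"
    then obtain m' where m': "m = Suc m'" "n \<le> m'" by (cases m) auto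
    have "x \<le> Max (H n)" using le \<open>x \<in> H n\<close> .
    also have "\<dots> \<le> Max (H m')" using mo m'(2) by blast
    also have "\<dots> < y" using gt[of m'] \<open>y \<in> H m\<close> m'(1) by blast
    finally show "x < y" .
  qed
  have "type2 (\<lambda>n. idxsum c (H n))" unfolding type2_def
  proof
    fix n
    let ?b = "\<lambda>n. idxsum c (H n)"
    let ?m = "Suc (Max (H n))"
    have sub: "FS ?b (Suc n) \<subseteq> Sm c ?m"
    proof
      fix v assume "v \<in> FS ?b (Suc n)"
      then obtain G where G: "G \<subseteq> {..<Suc n}" "G \<noteq> {}" "v = idxsum ?b G"
        unfolding FS_def by blast
      have finG: "finite G" using G(1) finite_subset by blast
      have v: "v = idxsum c (\<Union>(H ` G))" using compose[OF blk finG G(2)] G(3) by simp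
      have "\<Union>(H ` G) \<subseteq> {..<?m}"
      proof
        fix x assume "x \<in> \<Union>(H ` G)"
        then obtain k where k: "k \<in> G" "x \<in> H k" by blast
        have "x \<le> Max (H k)" using le k(2) .
        also have "\<dots> \<le> Max (H n)" using mo G(1) k(1) by auto
        finally show "x \<in> {..<?m}" by simp
      qed
      moreover have "\<Union>(H ` G) \<noteq> {}" using G(2) fin by blast
      ultimately show "v \<in> Sm c ?m" unfolding Sm_def using v by blast
    qed
    have "Sm c ?m \<inter> ((\<lambda>x. x + ?b (Suc n)) ` Sm c ?m) = {}"
      using nxt[of ?m] HS[of n] by simp
    then show "FS ?b (Suc n) \<inter> ((\<lambda>x. x + ?b (Suc n)) ` FS ?b (Suc n)) = {}"
      using sub by blast
  qed
  then show ?thesis using blk by blast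
qed


lemma blocks_fin: "blocks F \<Longrightarrow> finite (F n)" and blocks_ne: "blocks F \<Longrightarrow> F n \<noteq> {}"
  unfolding blocks_def by auto
lemma blocks_lt: "blocks F \<Longrightarrow> n < m \<Longrightarrow> x \<in> F n \<Longrightarrow> y \<in> F m \<Longrightarrow> x < y"
  unfolding blocks_def by blast
lemma AB_fin: "AB c G F' \<Longrightarrow> finite G" and AB_ne: "AB c G F' \<Longrightarrow> G \<noteq> {}"
  and AB_blocks: "AB c G F' \<Longrightarrow> blocks F'"
  and AB_lt: "AB c G F' \<Longrightarrow> x \<in> G \<Longrightarrow> y \<in> F' k \<Longrightarrow> x < y"
  and AB_abs: "AB c G F' \<Longrightarrow> idxsum c G + idxsum c (F' k) = idxsum c G"
  unfolding AB_def by auto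


definition refines :: "(nat \<Rightarrow> nat set) \<Rightarrow> (nat \<Rightarrow> nat set) \<Rightarrow> bool" where
  "refines F1 F2 \<longleftrightarrow> (\<forall>k. \<exists>H. finite H \<and> H \<noteq> {} \<and> F2 k = \<Union>(F1 ` H))"

lemma refines_union:
  assumes "refines F1 F2" "finite G" "G \<noteq> {}"
  shows "\<exists>H. finite H \<and> H \<noteq> {} \<and> \<Union>(F2 ` G) = \<Union>(F1 ` H)"
proof -
  have "\<exists>h. \<forall>k. finite (h k) \<and> h k \<noteq> {} \<and> F2 k = \<Union>(F1 ` h k)"
    using assms(1) unfolding refines_def by (rule choice[where Q="\<lambda>k H. finite H \<and> H \<noteq> {} \<and> F2 k = \<Union>(F1 ` H)"])
  then obtain h where h0: "\<forall>k. finite (h k) \<and> h k \<noteq> {} \<and> F2 k = \<Union>(F1 ` h k)" ..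
  have h: "\<And>k. finite (h k)" "\<And>k. h k \<noteq> {}" "\<And>k. F2 k = \<Union>(F1 ` h k)"
    using h0 by simp_all
  have "\<Union>(F2 ` G) = \<Union>(F1 ` (\<Union>(h ` G)))" by (auto simp: h(3))
  moreover have "finite (\<Union>(h ` G))" using h(1) assms(2) by simp
  moreover have "\<Union>(h ` G) \<noteq> {}" using h(2) assms(3) by simp
  ultimately show ?thesis by (intro exI[of _ "\<Union>(h ` G)"] conjI)
qed

lemma refines_trans:
  assumes r12: "refines F1 F2" and r23: "refines F2 F3" shows "refines F1 F3"
  unfolding refines_def
proof
  fix k
  have "\<exists>H. finite H \<and> H \<noteq> {} \<and> F3 k = \<Union>(F2 ` H)"
    using r23 unfolding refines_def by (rule spec)
  then obtain H where H: "finite H" "H \<noteq> {}" "F3 k = \<Union>(F2 ` H)"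
    by (elim exE conjE)
  obtain H' where "finite H'" "H' \<noteq> {}" "\<Union>(F2 ` H) = \<Union>(F1 ` H')"
    using refines_union[OF r12 H(1,2)] by (elim exE conjE)
  then show "\<exists>H. finite H \<and> H \<noteq> {} \<and> F3 k = \<Union>(F1 ` H)"
    using H(3) by (intro exI[of _ H'] conjI) simp_all
qed

lemma refines_refl: "refines F F"
  unfolding refines_def
proof
  fix k show "\<exists>H. finite H \<and> H \<noteq> {} \<and> F k = \<Union>(F ` H)"
    by (rule exI[of _ "{k}"]) simp
qed


theorem lemma5p1:
  fixes a :: "nat \<Rightarrow> 'a::semigroup_add"
  shows "\<exists>b. sumsequence a b \<and>
           ((\<forall>n m. n < m \<longrightarrow> b n + b m = b n) \<or>
            (\<forall>n. FS b (Suc n) \<inter> ((\<lambda>x. x + b (Suc n)) ` FS b (Suc n)) = {}))"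
proof (cases "\<exists>F. blocks F \<and> type2 (\<lambda>n. idxsum a (F n))")
  case True
  then obtain F where "blocks F" "type2 (\<lambda>n. idxsum a (F n))" by (elim exE conjE)
  then have "sumsequence a (\<lambda>n. idxsum a (F n))" unfolding sumsequence_def blocks_def
    by (intro exI[of _ F]) simp
  then show ?thesis using \<open>type2 (\<lambda>n. idxsum a (F n))\<close> unfolding type2_def
    by (intro exI[of _ "\<lambda>n. idxsum a (F n)"] conjI disjI2)
next
  case False
  have ab: "\<exists>G F'. AB (\<lambda>k. idxsum a (F k)) G F'" if bF: "blocks F" for F
  proof (rule ccontr)
    assume "\<not> ?thesis"
    from lemmaA[OF this] obtain H where H: "blocks H" "type2 (\<lambda>n. idxsum (\<lambda>k. idxsum a (F k)) (H n))"
      by (elim exE conjE)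
    have "idxsum (\<lambda>k. idxsum a (F k)) (H n) = idxsum a (\<Union>(F ` H n))" for n
      using compose[OF bF blocks_fin[OF H(1)] blocks_ne[OF H(1)]] by simp
    then have "type2 (\<lambda>n. idxsum a (\<Union>(F ` H n)))" using H(2) by simp
    then have "\<exists>F. blocks F \<and> type2 (\<lambda>n. idxsum a (F n))"
      using blocks_compose[OF bF H(1)] by (intro exI[of _ "\<lambda>k. \<Union>(F ` H k)"] conjI)
    then show False using False by simp
  qed
  define stp where "stp F = (SOME p. AB (\<lambda>k. idxsum a (F k)) (fst p) (snd p))" for F
  have stp: "AB (\<lambda>k. idxsum a (F k)) (fst (stp F)) (snd (stp F))" if "blocks F" for F
    unfolding stp_def using ab[OF that] by (metis (mono_tags, lifting) someI_ex fst_conv snd_conv)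
  define Fs where "Fs = rec_nat (\<lambda>n. {n}) (\<lambda>j F. (\<lambda>k. \<Union>(F ` (snd (stp F) k))))"
  have Fs0: "Fs 0 = (\<lambda>n. {n})" and FsS: "Fs (Suc j) = (\<lambda>k. \<Union>(Fs j ` (snd (stp (Fs j)) k)))" for j
    unfolding Fs_def by simp_all
  define G where "G j = fst (stp (Fs j))" for j
  define F' where "F' j = snd (stp (Fs j))" for j
  have blkFs: "blocks (Fs j)" for j
  proof (induction j)
    case 0 show ?case unfolding Fs0 blocks_def by auto
  next
    case (Suc j)
    have "blocks (snd (stp (Fs j)))" using stp[OF Suc] by (rule AB_blocks)
    from blocks_compose[OF Suc this] show ?case unfolding FsS .
  qed
  have ABj: "AB (\<lambda>k. idxsum a (Fs j k)) (G j) (F' j)" for j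
    using stp[OF blkFs[of j]] unfolding G_def F'_def .
  define T where "T j = \<Union>(Fs j ` G j)" for j
  have ref1: "refines (Fs j) (Fs (Suc j))" for j
    unfolding refines_def FsS F'_def[symmetric]
    using blocks_fin[OF AB_blocks[OF ABj[of j]]] blocks_ne[OF AB_blocks[OF ABj[of j]]]
    by (intro allI exI[of _ "F' j k" for k] conjI) simp_all
  have ref: "refines (Fs (Suc j)) (Fs m)" if "Suc j \<le> m" for j m
    using that
  proof (induction m rule: dec_induct)
    case base then show ?case by (rule refines_refl)
  next
    case (step m) from step(3) ref1[of m] show ?case by (rule refines_trans)
  qed
  have finT: "finite (T j) \<and> T j \<noteq> {}" for j
    using AB_fin[OF ABj[of j]] AB_ne[OF ABj[of j]] blocks_fin[OF blkFs[of j]] blocks_ne[OF blkFs[of j]]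
    unfolding T_def by auto
  have tabs: "idxsum a (T j) + idxsum a (Fs (Suc j) k) = idxsum a (T j)" for j k
  proof -
    have G: "finite (G j)" "G j \<noteq> {}" using AB_fin[OF ABj[of j]] AB_ne[OF ABj[of j]] by auto
    have F: "finite (F' j k)" "F' j k \<noteq> {}" using blocks_fin[OF AB_blocks[OF ABj[of j]]] blocks_ne[OF AB_blocks[OF ABj[of j]]] by auto
    have "idxsum a (T j) = idxsum (\<lambda>k. idxsum a (Fs j k)) (G j)"
      unfolding T_def using compose[OF blkFs[of j] G, of a] by simp
    moreover have "idxsum a (Fs (Suc j) k) = idxsum (\<lambda>k. idxsum a (Fs j k)) (F' j k)"
      unfolding FsS F'_def[symmetric] using compose[OF blkFs[of j] F, of a] by simp
    ultimately show ?thesis using AB_abs[OF ABj[of j]] by simp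
  qed
  have tabs2: "idxsum a (T j) + idxsum a (\<Union>(Fs (Suc j) ` H)) = idxsum a (T j)"
    if "finite H" "H \<noteq> {}" for j H
    using absorb[OF that, of "idxsum a (T j)" "\<lambda>k. idxsum a (Fs (Suc j) k)"] tabs
      compose[OF blkFs[of "Suc j"] that, of a] by simp
  have rep: "\<exists>H. finite H \<and> H \<noteq> {} \<and> T m = \<Union>(Fs (Suc j) ` H)" if "j < m" for j m
    using refines_union[OF ref[of j m] AB_fin[OF ABj[of m]] AB_ne[OF ABj[of m]]] that unfolding T_def by simp
  have ord: "\<forall>x\<in>T j. \<forall>y\<in>T m. x < y" if jm: "j < m" for j m
  proof (intro ballI)
    fix x y assume x: "x \<in> T j" and y: "y \<in> T m"
    obtain H where H: "T m = \<Union>(Fs (Suc j) ` H)" using rep[OF jm] by (elim exE conjE)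
    obtain k f where f: "f \<in> F' j k" "y \<in> Fs j f" using y H unfolding FsS F'_def by auto
    obtain g where g: "g \<in> G j" "x \<in> Fs j g" using x unfolding T_def by auto
    have "g < f" using AB_lt[OF ABj[of j] g(1) f(1)] .
    then show "x < y" using blocks_lt[OF blkFs[of j] _ g(2) f(2)] by blast
  qed
  show ?thesis
  proof (intro exI conjI disjI1)
    show "sumsequence a (\<lambda>j. idxsum a (T j))"
      unfolding sumsequence_def
      by (intro exI[of _ T] conjI allI impI) (use finT ord in auto)
    show "\<forall>n m. n < m \<longrightarrow> idxsum a (T n) + idxsum a (T m) = idxsum a (T n)"
    proof (intro allI impI)
      fix n m :: nat assume "n < m"
      then obtain H where "finite H" "H \<noteq> {}" "T m = \<Union>(Fs (Suc n) ` H)" using rep[OF \<open>n < m\<close>] by (elim exE conjE)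
      then show "idxsum a (T n) + idxsum a (T m) = idxsum a (T n)" using tabs2 by simp
    qed
  qed
qed

end
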